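(* Let $T$ be a commutative ring with identity, $S$ a unital subring and $I$ a nil ideal of $T$ with $T=S+I$ and $S\cap I=\{0\}$. Then: (1) $T$ is almost complemented if and only if $S$ is almost complemented; (2) $T$ is $\pi$-complemented if and only if $S$ is $\pi$-complemented and $I$ is a torsion-free $S$-module; (3) $T$ has Property $D^\flat$ if and only if $S$ has Property $D^\flat$.
   Context: For a ring $A$, $\mathfrak{N}(A)$ is the nilradical, $\mathrm{reg}(A)$ the regular elements, $\mathrm{areg}(A)=\{x: x+\mathfrak{N}(A)\in\mathrm{reg}(A/\mathfrak{N}(A))\}$. An element $a$ is complemented if there is $b$ with $ab=0$, $a+b\in\mathrm{reg}(A)$; $A$ is complemented if all elements are; $A$ is almost complemented if $A/\mathfrak{N}(A)$ is complemented; $A$ is $\pi$-complemented if every element has a complemented power. $A$ has Property $D^\flat$ if $A\setminus\mathfrak{N}(A)=\mathrm{areg}(A)$. An $S$-module $M$ is torsion-free if $rm=0$ with $r\in\mathrm{reg}(S)$ implies $m=0$. *)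

theory Defs
  imports "HOL-Algebra.Algebra"
begin

definition nilrad :: "('a, 'b) ring_scheme \<Rightarrow> 'a set" where
  "nilrad R = {x \<in> carrier R. \<exists>n::nat. x [^]\<^bsub>R\<^esub> n = \<zero>\<^bsub>R\<^esub>}"

definition reg :: "('a, 'b) ring_scheme \<Rightarrow> 'a set" where
  "reg R = {x \<in> carrier R. \<forall>y \<in> carrier R. x \<otimes>\<^bsub>R\<^esub> y = \<zero>\<^bsub>R\<^esub> \<longrightarrow> y = \<zero>\<^bsub>R\<^esub>}"

definition areg :: "('a, 'b) ring_scheme \<Rightarrow> 'a set" where
  "areg R = {x \<in> carrier R. nilrad R +>\<^bsub>R\<^esub> x \<in> reg (R Quot nilrad R)}"

definition complemented_elem :: "('a, 'b) ring_scheme \<Rightarrow> 'a \<Rightarrow> bool" where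
  "complemented_elem R a \<longleftrightarrow>
     (\<exists>b \<in> carrier R. a \<otimes>\<^bsub>R\<^esub> b = \<zero>\<^bsub>R\<^esub> \<and> a \<oplus>\<^bsub>R\<^esub> b \<in> reg R)"

definition complemented :: "('a, 'b) ring_scheme \<Rightarrow> bool" where
  "complemented R \<longleftrightarrow> (\<forall>a \<in> carrier R. complemented_elem R a)"

definition almost_complemented :: "('a, 'b) ring_scheme \<Rightarrow> bool" where
  "almost_complemented R \<longleftrightarrow> complemented (R Quot nilrad R)"

definition pi_complemented :: "('a, 'b) ring_scheme \<Rightarrow> bool" where
  "pi_complemented R \<longleftrightarrow>
     (\<forall>a \<in> carrier R. \<exists>n::nat. n \<ge> 1 \<and> complemented_elem R (a [^]\<^bsub>R\<^esub> n))"

definition property_D_flat :: "('a, 'b) ring_scheme \<Rightarrow> bool" where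
  "property_D_flat R \<longleftrightarrow> carrier R - nilrad R = areg R"

text \<open>Torsion-freeness of a subset M of the ring T as a module over the
  subring with carrier S (the action being multiplication in T).\<close>
definition torsion_free_over :: "('a, 'b) ring_scheme \<Rightarrow> 'a set \<Rightarrow> 'a set \<Rightarrow> bool" where
  "torsion_free_over T S M \<longleftrightarrow>
     (\<forall>r \<in> reg (T\<lparr>carrier := S\<rparr>). \<forall>m \<in> M. r \<otimes>\<^bsub>T\<^esub> m = \<zero>\<^bsub>T\<^esub> \<longrightarrow> m = \<zero>\<^bsub>T\<^esub>)"

end

theory Submission
  imports Defs
begin

lemma (in cring) pow_add_ideal:
  assumes J: "ideal J R" and s: "s \<in> carrier R" and i: "i \<in> J"
  shows "\<exists>j\<in>J. (s \<oplus> i) [^] (m::nat) = s [^] m \<oplus> j"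
proof (induction m)
  case 0
  have "\<zero> \<in> J" using J by (simp add: additive_subgroup.zero_closed ideal.axioms(1))
  then show ?case by (intro bexI[of _ \<zero>]) auto
next
  case (Suc m)
  from Suc.IH obtain j where j: "j \<in> J" and e: "(s \<oplus> i) [^] m = s [^] m \<oplus> j" by (rule bexE)
  have jc: "j \<in> carrier R" and ic: "i \<in> carrier R" using ideal.Icarr[OF J j] ideal.Icarr[OF J i] by auto
  have sm: "s [^] m \<in> carrier R" using s by simp
  have "(s \<oplus> i) [^] Suc m = (s [^] m \<oplus> j) \<otimes> (s \<oplus> i)" using e by simp
  also have "\<dots> = s [^] m \<otimes> (s \<oplus> i) \<oplus> j \<otimes> (s \<oplus> i)"
    using sm s ic jc by (simp add: l_distr)
  also have "\<dots> = (s [^] m \<otimes> s \<oplus> s [^] m \<otimes> i) \<oplus> j \<otimes> (s \<oplus> i)"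
    using sm s ic jc by (simp add: r_distr)
  also have "\<dots> = s [^] Suc m \<oplus> (s [^] m \<otimes> i \<oplus> j \<otimes> (s \<oplus> i))"
    using sm s ic jc by (simp add: a_assoc)
  finally have "(s \<oplus> i) [^] Suc m = s [^] Suc m \<oplus> (s [^] m \<otimes> i \<oplus> j \<otimes> (s \<oplus> i))" .
  moreover have "s [^] m \<otimes> i \<oplus> j \<otimes> (s \<oplus> i) \<in> J"
    using J i j s ic sm by (meson additive_subgroup.a_closed ideal.axioms(1) ideal.I_l_closed ideal.I_r_closed add.m_closed)
  ultimately show ?case by blast
qed
lemma (in cring) nil_mult:
  assumes "a \<in> nilrad R" "x \<in> carrier R" shows "x \<otimes> a \<in> nilrad R"
proof -
  obtain n where a: "a \<in> carrier R" "a [^] (n::nat) = \<zero>" using assms unfolding nilrad_def by blast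
  then have "(x \<otimes> a) [^] n = \<zero>" using assms(2) by (simp add: nat_pow_distrib)
  then show ?thesis unfolding nilrad_def using a assms(2) by blast
qed

lemma (in cring) nilrad_ideal: "ideal (nilrad R) R"
proof (rule idealI)
  show "ring R" by (rule ring_axioms)
  show "\<And>a x. a \<in> nilrad R \<Longrightarrow> x \<in> carrier R \<Longrightarrow> x \<otimes> a \<in> nilrad R" by (rule nil_mult)
  show "\<And>a x. a \<in> nilrad R \<Longrightarrow> x \<in> carrier R \<Longrightarrow> a \<otimes> x \<in> nilrad R"
    using nil_mult m_comm unfolding nilrad_def by auto
  show "subgroup (nilrad R) (add_monoid R)"
  proof
    show "nilrad R \<subseteq> carrier (add_monoid R)" unfolding nilrad_def by auto
    show "\<one>\<^bsub>add_monoid R\<^esub> \<in> nilrad R" unfolding nilrad_def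
      by (auto intro!: exI[of _ 1])
    fix a assume a: "a \<in> nilrad R"
    then have ac: "a \<in> carrier R" unfolding nilrad_def by auto
    have "\<ominus> a = (\<ominus> \<one>) \<otimes> a" using ac by (simp add: l_minus)
    then show "inv\<^bsub>add_monoid R\<^esub> a \<in> nilrad R" using nil_mult[OF a] ac
      by (simp add: a_inv_def)
  next
    fix a b assume a: "a \<in> nilrad R" and b: "b \<in> nilrad R"
    obtain m where ac: "a \<in> carrier R" and am: "a [^] (m::nat) = \<zero>" using a unfolding nilrad_def by blast
    obtain k where bc: "b \<in> carrier R" and bk: "b [^] (k::nat) = \<zero>" using b unfolding nilrad_def by blast
    have J: "ideal (PIdl a) R" using ac by (rule cgenideal_ideal)
    have aJ: "a \<in> PIdl a" using ac by (rule cgenideal_self)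
    obtain j where j: "j \<in> PIdl a" and e: "(b \<oplus> a) [^] k = b [^] k \<oplus> j"
      using pow_add_ideal[OF J bc aJ] by blast
    obtain x where x: "x \<in> carrier R" and jx: "j = x \<otimes> a" using j unfolding cgenideal_def by blast
    have "(b \<oplus> a) [^] k = x \<otimes> a" using e bk jx x ac by simp
    then have "((b \<oplus> a) [^] k) [^] m = \<zero>" using x ac am by (simp add: nat_pow_distrib)
    then have "(a \<oplus> b) [^] (k * m) = \<zero>" using ac bc by (simp add: nat_pow_pow a_comm)
    then show "a \<otimes>\<^bsub>add_monoid R\<^esub> b \<in> nilrad R" unfolding nilrad_def using ac bc by auto
  qed
qed

definition ar :: "('a,'b) ring_scheme \<Rightarrow> 'a \<Rightarrow> bool" where
  "ar R x \<longleftrightarrow> x \<in> carrier R \<and> (\<forall>y\<in>carrier R. x \<otimes>\<^bsub>R\<^esub> y \<in> nilrad R \<longrightarrow> y \<in> nilrad R)"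

context cring begin

lemma q_carrier: "carrier (R Quot nilrad R) = (\<lambda>x. nilrad R +> x) ` carrier R"
  unfolding FactRing_def A_RCOSETS_def' by auto

lemma q_mult: "x \<in> carrier R \<Longrightarrow> y \<in> carrier R \<Longrightarrow>
   (nilrad R +> x) \<otimes>\<^bsub>R Quot nilrad R\<^esub> (nilrad R +> y) = nilrad R +> (x \<otimes> y)"
  using ideal.rcoset_mult_add[OF nilrad_ideal] by (simp add: FactRing_def)

lemma q_add: "x \<in> carrier R \<Longrightarrow> y \<in> carrier R \<Longrightarrow>
   (nilrad R +> x) \<oplus>\<^bsub>R Quot nilrad R\<^esub> (nilrad R +> y) = nilrad R +> (x \<oplus> y)"
  using ideal.a_rcos_sum[OF nilrad_ideal] by (simp add: FactRing_def)

lemma q_zero: "\<zero>\<^bsub>R Quot nilrad R\<^esub> = nilrad R"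
  by (simp add: FactRing_def)

lemma q_eq0: "x \<in> carrier R \<Longrightarrow> (nilrad R +> x = nilrad R) \<longleftrightarrow> x \<in> nilrad R"
  using ideal.rcos_const_imp_mem[OF nilrad_ideal] a_rcos_zero[OF nilrad_ideal] by blast

lemma q_reg: assumes x: "x \<in> carrier R"
  shows "nilrad R +> x \<in> reg (R Quot nilrad R) \<longleftrightarrow> ar R x"
proof -
  have "nilrad R +> x \<in> carrier (R Quot nilrad R)" using x q_carrier by auto
  then show ?thesis
    unfolding reg_def ar_def using x
    by (auto simp: q_carrier q_mult q_zero q_eq0)
qed

lemma areg_char: "areg R = {x. ar R x}"
  unfolding areg_def by (auto simp: q_reg ar_def)

lemma almost_char: "almost_complemented R \<longleftrightarrow>
   (\<forall>a\<in>carrier R. \<exists>b\<in>carrier R. a \<otimes> b \<in> nilrad R \<and> ar R (a \<oplus> b))"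
  unfolding almost_complemented_def complemented_def complemented_elem_def
  by (auto simp: q_carrier q_mult q_add q_zero q_eq0 q_reg)

lemma dflat_char: "property_D_flat R \<longleftrightarrow> (\<forall>x\<in>carrier R. x \<notin> nilrad R \<longleftrightarrow> ar R x)"
proof -
  have c: "\<And>x. ar R x \<Longrightarrow> x \<in> carrier R" by (simp add: ar_def)
  show ?thesis unfolding property_D_flat_def areg_char using c by blast
qed

end

context cring begin

lemma nil_carr: "n \<in> nilrad R \<Longrightarrow> n \<in> carrier R"
  unfolding nilrad_def by auto

lemma nil_add_iff: assumes x: "x \<in> carrier R" and n: "n \<in> nilrad R"
  shows "x \<oplus> n \<in> nilrad R \<longleftrightarrow> x \<in> nilrad R"
proof -
  interpret N: ideal "nilrad R" R by (rule nilrad_ideal)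
  have nc: "n \<in> carrier R" using n nil_carr by blast
  have e: "x = (x \<oplus> n) \<oplus> (\<ominus> n)" using x nc by (simp add: a_assoc r_neg)
  show ?thesis
  proof
    assume "x \<oplus> n \<in> nilrad R"
    then have "(x \<oplus> n) \<oplus> (\<ominus> n) \<in> nilrad R" using n N.a_closed N.a_inv_closed by blast
    then show "x \<in> nilrad R" using e by simp
  qed (use n N.a_closed in blast)
qed

lemma ar_add_nil: assumes x: "x \<in> carrier R" and n: "n \<in> nilrad R"
  shows "ar R (x \<oplus> n) \<longleftrightarrow> ar R x"
proof -
  interpret N: ideal "nilrad R" R by (rule nilrad_ideal)
  have nc: "n \<in> carrier R" using n nil_carr by blast
  have "(x \<oplus> n) \<otimes> y \<in> nilrad R \<longleftrightarrow> x \<otimes> y \<in> nilrad R" if y: "y \<in> carrier R" for y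
  proof -
    have "(x \<oplus> n) \<otimes> y = x \<otimes> y \<oplus> n \<otimes> y" using x nc y by (simp add: l_distr)
    moreover have "n \<otimes> y \<in> nilrad R" using n y N.I_r_closed by blast
    ultimately show ?thesis using nil_add_iff x y by simp
  qed
  then show ?thesis unfolding ar_def using x nc by auto
qed

lemma reg_pow: assumes x: "x \<in> reg R" shows "x [^] (k::nat) \<in> reg R"
proof (induction k)
  case 0
  then show ?case unfolding reg_def by auto
next
  case (Suc k)
  have xc: "x \<in> carrier R" using x unfolding reg_def by auto
  have kc: "x [^] k \<in> carrier R" using xc by simp
  show ?case unfolding reg_def
  proof (intro CollectI conjI ballI impI)
    show "x [^] Suc k \<in> carrier R" using xc by simp
    fix y assume y: "y \<in> carrier R" and e: "x [^] Suc k \<otimes> y = \<zero>"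
    have "x [^] k \<otimes> (x \<otimes> y) = \<zero>" using e xc kc y by (simp add: m_assoc)
    then have "x \<otimes> y = \<zero>" using Suc y xc unfolding reg_def by auto
    then show "y = \<zero>" using x y unfolding reg_def by auto
  qed
qed

lemma reg_add_nil: assumes x: "x \<in> reg R" and n: "n \<in> nilrad R"
  shows "x \<oplus> n \<in> reg R"
proof -
  interpret N: ideal "nilrad R" R by (rule nilrad_ideal)
  have xc: "x \<in> carrier R" using x unfolding reg_def by auto
  have nc: "n \<in> carrier R" using n nil_carr by blast
  show ?thesis unfolding reg_def
  proof (intro CollectI conjI ballI impI)
    show "x \<oplus> n \<in> carrier R" using xc nc by simp
    fix y assume y: "y \<in> carrier R" and e: "(x \<oplus> n) \<otimes> y = \<zero>"
    have "x \<otimes> y \<oplus> n \<otimes> y = \<zero>" using e xc nc y by (simp add: l_distr)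
    then have "\<ominus> (n \<otimes> y) = x \<otimes> y" using xc nc y by (intro minus_equality) auto
    then have xy: "x \<otimes> y = (\<ominus> n) \<otimes> y" using xc nc y by (simp add: l_minus)
    have "x [^] k \<otimes> y = (\<ominus> n) [^] k \<otimes> y" for k :: nat
    proof (induction k)
      case 0 then show ?case using y by simp
    next
      case (Suc k)
      have "x [^] Suc k \<otimes> y = x [^] k \<otimes> (x \<otimes> y)" using xc y by (simp add: m_assoc)
      also have "\<dots> = x [^] k \<otimes> ((\<ominus> n) \<otimes> y)" using xy by simp
      also have "\<dots> = (\<ominus> n) \<otimes> (x [^] k \<otimes> y)" using xc nc y by (intro m_lcomm) auto
      also have "\<dots> = (\<ominus> n) \<otimes> ((\<ominus> n) [^] k \<otimes> y)" using Suc by simp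
      also have "\<dots> = ((\<ominus> n) \<otimes> (\<ominus> n) [^] k) \<otimes> y" using nc y by (simp add: m_assoc)
      also have "\<dots> = ((\<ominus> n) [^] k \<otimes> (\<ominus> n)) \<otimes> y" using nc y by (simp add: m_comm[of "\<ominus> n" "(\<ominus> n) [^] k"])
      also have "\<dots> = (\<ominus> n) [^] Suc k \<otimes> y" by simp
      finally show ?case .
    qed
    moreover obtain k :: nat where "(\<ominus> n) [^] k = \<zero>"
      using N.a_inv_closed[OF n] unfolding nilrad_def by auto
    ultimately have "x [^] k \<otimes> y = \<zero>" using y by simp
    then show "y = \<zero>" using reg_pow[OF x] y unfolding reg_def by auto
  qed
qed

lemma reg_add_nil_iff: assumes x: "x \<in> carrier R" and n: "n \<in> nilrad R"
  shows "x \<oplus> n \<in> reg R \<longleftrightarrow> x \<in> reg R"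
proof
  interpret N: ideal "nilrad R" R by (rule nilrad_ideal)
  have nc: "n \<in> carrier R" using n nil_carr by blast
  assume "x \<oplus> n \<in> reg R"
  then have "(x \<oplus> n) \<oplus> (\<ominus> n) \<in> reg R" using reg_add_nil N.a_inv_closed[OF n] by blast
  then show "x \<in> reg R" using x nc by (simp add: a_assoc r_neg)
qed (use reg_add_nil n in blast)

lemma pow_sum_orth: assumes a: "a \<in> carrier R" and b: "b \<in> carrier R" and ab: "a \<otimes> b = \<zero>"
  shows "(a \<oplus> b) [^] Suc k = a [^] Suc k \<oplus> b [^] Suc k"
proof (induction k)
  case 0 then show ?case using a b by simp
next
  case (Suc k)
  have ak: "a [^] Suc k \<in> carrier R" "b [^] Suc k \<in> carrier R" using a b by simp_all
  have z1: "a [^] Suc k \<otimes> b = \<zero>" using a b ab by (simp add: m_assoc)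
  have "b [^] Suc k \<otimes> a = b [^] k \<otimes> (b \<otimes> a)" using a b by (simp add: m_assoc)
  also have "\<dots> = b [^] k \<otimes> (a \<otimes> b)" using a b by (simp add: m_comm)
  finally have z2: "b [^] Suc k \<otimes> a = \<zero>" using ab b by simp
  have "(a \<oplus> b) [^] Suc (Suc k) = (a [^] Suc k \<oplus> b [^] Suc k) \<otimes> (a \<oplus> b)"
    by (simp only: nat_pow_Suc[of "a \<oplus> b" "Suc k"] Suc)
  also have "\<dots> = a [^] Suc k \<otimes> (a \<oplus> b) \<oplus> b [^] Suc k \<otimes> (a \<oplus> b)"
    using ak a b by (simp add: l_distr)
  also have "a [^] Suc k \<otimes> (a \<oplus> b) = a [^] Suc (Suc k)"
    using ak a b z1 by (simp add: r_distr del: nat_pow_Suc)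
  also have "b [^] Suc k \<otimes> (a \<oplus> b) = b [^] Suc (Suc k)"
    using ak a b z2 by (simp add: r_distr del: nat_pow_Suc)
  finally show ?case .
qed

end

locale nil_split = cring R for R (structure) +
  fixes S I :: "'a set"
  assumes sub: "subring S R" and idl: "ideal I R" and nil: "I \<subseteq> nilrad R"
    and dec: "carrier R = S <+> I" and dis: "S \<inter> I = {\<zero>}"
begin

abbreviation SR where "SR \<equiv> R\<lparr>carrier := S\<rparr>"

lemma S_carr: "S \<subseteq> carrier R" using subringE(1)[OF sub] .
lemma I_carr: "I \<subseteq> carrier R" using ideal.Icarr[OF idl] by blast
lemma S_mult: "a \<in> S \<Longrightarrow> b \<in> S \<Longrightarrow> a \<otimes> b \<in> S" using subringE(6)[OF sub] by blast
lemma S_add: "a \<in> S \<Longrightarrow> b \<in> S \<Longrightarrow> a \<oplus> b \<in> S" using subringE(7)[OF sub] by blast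
lemma S_zero: "\<zero> \<in> S" using subringE(2)[OF sub] .
lemma I_zero: "\<zero> \<in> I" using idl by (simp add: additive_subgroup.zero_closed ideal.axioms(1))
lemma I_lc: "i \<in> I \<Longrightarrow> x \<in> carrier R \<Longrightarrow> x \<otimes> i \<in> I" using ideal.I_l_closed[OF idl] by blast
lemma I_rc: "i \<in> I \<Longrightarrow> x \<in> carrier R \<Longrightarrow> i \<otimes> x \<in> I" using ideal.I_r_closed[OF idl] by blast
lemma I_neg: "i \<in> I \<Longrightarrow> \<ominus> i \<in> I" using additive_subgroup.a_inv_closed[OF ideal.axioms(1)[OF idl]] by blast

lemma S_pow: "s \<in> S \<Longrightarrow> s [^] (n::nat) \<in> S"
  by (induction n) (auto simp: S_mult subringE(3)[OF sub])

lemma scr: "cring SR"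
  using subcring_iff[OF S_carr] subcringI'[OF sub] by blast

lemma pow_SR: "x [^]\<^bsub>SR\<^esub> (n::nat) = x [^] n"
  by (simp add: nat_pow_def)

lemma decomp: "x \<in> carrier R \<Longrightarrow> \<exists>s\<in>S. \<exists>i\<in>I. x = s \<oplus> i"
  using dec by (auto simp: set_add_def')

lemma zero_dec: assumes s: "s \<in> S" and i: "i \<in> I" and e: "s \<oplus> i = \<zero>"
  shows "s = \<zero> \<and> i = \<zero>"
proof -
  have sc: "s \<in> carrier R" and ic: "i \<in> carrier R" using s i S_carr I_carr by auto
  have "\<ominus> i = s" using sc ic e by (intro minus_equality) auto
  then have "s = \<ominus> i" by simp
  then have "s \<in> I" using I_neg i by simp
  then have "s = \<zero>" using dis s by auto
  then show ?thesis using e ic by simp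
qed

lemma nil_SR: "nilrad SR = nilrad R \<inter> S"
  unfolding nilrad_def using S_carr by (auto simp: pow_SR)

lemma reg_SR: "reg SR = {x \<in> S. \<forall>y\<in>S. x \<otimes> y = \<zero> \<longrightarrow> y = \<zero>}"
  unfolding reg_def by simp

lemma ar_SR: "ar SR x \<longleftrightarrow> x \<in> S \<and> (\<forall>y\<in>S. x \<otimes> y \<in> nilrad R \<longrightarrow> y \<in> nilrad R)"
  unfolding ar_def nil_SR using S_mult by auto

lemma I_nil: "i \<in> I \<Longrightarrow> i \<in> nilrad R" using nil by blast

lemma nilK: assumes s: "s \<in> S" and i: "i \<in> I"
  shows "s \<oplus> i \<in> nilrad R \<longleftrightarrow> s \<in> nilrad SR"
  using nil_add_iff[of s i] s i S_carr I_nil nil_SR by auto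

lemma regK: assumes s: "s \<in> S"
  shows "s \<in> reg R \<longleftrightarrow> s \<in> reg SR \<and> (\<forall>i\<in>I. s \<otimes> i = \<zero> \<longrightarrow> i = \<zero>)"
proof
  assume "s \<in> reg R"
  then show "s \<in> reg SR \<and> (\<forall>i\<in>I. s \<otimes> i = \<zero> \<longrightarrow> i = \<zero>)"
    unfolding reg_def using s S_carr I_carr by auto
next
  assume a: "s \<in> reg SR \<and> (\<forall>i\<in>I. s \<otimes> i = \<zero> \<longrightarrow> i = \<zero>)"
  have sc: "s \<in> carrier R" using s S_carr by auto
  show "s \<in> reg R" unfolding reg_def
  proof (intro CollectI conjI ballI impI)
    show "s \<in> carrier R" by fact
    fix y assume y: "y \<in> carrier R" and e: "s \<otimes> y = \<zero>"
    obtain s' i' where s': "s' \<in> S" and i': "i' \<in> I" and yd: "y = s' \<oplus> i'" using decomp[OF y] by blast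
    have "s \<otimes> s' \<oplus> s \<otimes> i' = \<zero>" using e yd sc s' i' S_carr I_carr by (simp add: r_distr subsetD)
    then have "s \<otimes> s' = \<zero> \<and> s \<otimes> i' = \<zero>"
      using zero_dec[of "s \<otimes> s'" "s \<otimes> i'"] S_mult[OF s s'] I_lc[OF i' sc] by blast
    then have "s' = \<zero>" "i' = \<zero>" using a s' i' unfolding reg_SR by auto
    then show "y = \<zero>" using yd by simp
  qed
qed

lemma arK: assumes s: "s \<in> S" and i: "i \<in> I"
  shows "ar R (s \<oplus> i) \<longleftrightarrow> ar SR s"
proof -
  have sc: "s \<in> carrier R" using s S_carr by auto
  have "ar R s \<longleftrightarrow> ar SR s"
  proof
    assume "ar R s" then show "ar SR s" unfolding ar_SR using s S_carr by (auto simp: ar_def)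
  next
    assume a: "ar SR s"
    show "ar R s" unfolding ar_def
    proof (intro conjI ballI impI)
      show "s \<in> carrier R" by fact
      fix y assume y: "y \<in> carrier R" and e: "s \<otimes> y \<in> nilrad R"
      obtain s' i' where s': "s' \<in> S" and i': "i' \<in> I" and yd: "y = s' \<oplus> i'" using decomp[OF y] by blast
      have s'c: "s' \<in> carrier R" and i'c: "i' \<in> carrier R" using s' i' S_carr I_carr by auto
      have "s \<otimes> y = s \<otimes> s' \<oplus> s \<otimes> i'" using yd sc s'c i'c by (simp add: r_distr)
      then have "s \<otimes> s' \<in> nilrad R" using e nil_add_iff[of "s \<otimes> s'" "s \<otimes> i'"] sc s'c
          I_nil[OF I_lc[OF i' sc]] by simp
      then have "s' \<in> nilrad R" using a s' unfolding ar_SR by auto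
      then show "y \<in> nilrad R" using yd nil_add_iff s'c I_nil[OF i'] by simp
    qed
  qed
  then show ?thesis using ar_add_nil[OF sc I_nil[OF i]] by simp
qed

end

context nil_split begin

lemma sc_carr: "s \<in> S \<Longrightarrow> s \<in> carrier R" using S_carr by blast
lemma ic_carr: "i \<in> I \<Longrightarrow> i \<in> carrier R" using I_carr by blast

lemma part1: "almost_complemented R \<longleftrightarrow> almost_complemented SR"
proof -
  have SRc: "almost_complemented SR \<longleftrightarrow>
     (\<forall>a\<in>S. \<exists>b\<in>S. a \<otimes> b \<in> nilrad SR \<and> ar SR (a \<oplus> b))"
    using cring.almost_char[OF scr] by simp
  show ?thesis unfolding SRc almost_char
  proof
    assume H: "\<forall>a\<in>carrier R. \<exists>b\<in>carrier R. a \<otimes> b \<in> nilrad R \<and> ar R (a \<oplus> b)"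
    show "\<forall>a\<in>S. \<exists>b\<in>S. a \<otimes> b \<in> nilrad SR \<and> ar SR (a \<oplus> b)"
    proof
      fix a assume a: "a \<in> S"
      have ac: "a \<in> carrier R" using a sc_carr by blast
      obtain b where b: "b \<in> carrier R" and ab: "a \<otimes> b \<in> nilrad R" and arb: "ar R (a \<oplus> b)"
        using H ac by blast
      obtain s' i' where s': "s' \<in> S" and i': "i' \<in> I" and bd: "b = s' \<oplus> i'" using decomp[OF b] by blast
      have s'c: "s' \<in> carrier R" and i'c: "i' \<in> carrier R" using s' i' sc_carr ic_carr by auto
      have "a \<otimes> b = a \<otimes> s' \<oplus> a \<otimes> i'" using bd ac s'c i'c by (simp add: r_distr)
      then have "a \<otimes> s' \<in> nilrad R" using ab nil_add_iff[of "a \<otimes> s'" "a \<otimes> i'"] ac s'c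
          I_nil[OF I_lc[OF i' ac]] by simp
      then have 1: "a \<otimes> s' \<in> nilrad SR" using nil_SR S_mult[OF a s'] by simp
      have "a \<oplus> b = (a \<oplus> s') \<oplus> i'" using bd ac s'c i'c by (simp add: a_assoc)
      then have 2: "ar SR (a \<oplus> s')" using arb arK[OF S_add[OF a s'] i'] by simp
      show "\<exists>b\<in>S. a \<otimes> b \<in> nilrad SR \<and> ar SR (a \<oplus> b)" using 1 2 s' by blast
    qed
  next
    assume H: "\<forall>a\<in>S. \<exists>b\<in>S. a \<otimes> b \<in> nilrad SR \<and> ar SR (a \<oplus> b)"
    show "\<forall>a\<in>carrier R. \<exists>b\<in>carrier R. a \<otimes> b \<in> nilrad R \<and> ar R (a \<oplus> b)"
    proof
      fix a assume a: "a \<in> carrier R"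
      obtain s i where s: "s \<in> S" and i: "i \<in> I" and ad: "a = s \<oplus> i" using decomp[OF a] by blast
      have sc: "s \<in> carrier R" and ic: "i \<in> carrier R" using s i sc_carr ic_carr by auto
      obtain s' where s': "s' \<in> S" and ss: "s \<otimes> s' \<in> nilrad SR" and ars: "ar SR (s \<oplus> s')"
        using H s by blast
      have s'c: "s' \<in> carrier R" using s' sc_carr by blast
      have "a \<otimes> s' = s \<otimes> s' \<oplus> i \<otimes> s'" using ad sc ic s'c by (simp add: l_distr)
      moreover have "s \<otimes> s' \<in> nilrad R" using ss nil_SR by simp
      ultimately have 1: "a \<otimes> s' \<in> nilrad R"
        using nil_add_iff[of "s \<otimes> s'" "i \<otimes> s'"] sc s'c I_nil[OF I_rc[OF i s'c]] by simp
      have "a \<oplus> s' = (s \<oplus> s') \<oplus> i" using ad sc ic s'c by (simp add: a_ac)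
      then have 2: "ar R (a \<oplus> s')" using ars arK[OF S_add[OF s s'] i] by simp
      show "\<exists>b\<in>carrier R. a \<otimes> b \<in> nilrad R \<and> ar R (a \<oplus> b)" using 1 2 s'c by blast
    qed
  qed
qed

lemma part3: "property_D_flat R \<longleftrightarrow> property_D_flat SR"
proof -
  have SRc: "property_D_flat SR \<longleftrightarrow> (\<forall>x\<in>S. x \<notin> nilrad SR \<longleftrightarrow> ar SR x)"
    using cring.dflat_char[OF scr] by simp
  have K: "(x \<notin> nilrad R \<longleftrightarrow> ar R x) \<longleftrightarrow> (s \<notin> nilrad SR \<longleftrightarrow> ar SR s)"
    if "s \<in> S" "i \<in> I" "x = s \<oplus> i" for x s i
    using nilK[OF that(1,2)] arK[OF that(1,2)] that(3) by simp
  show ?thesis unfolding SRc dflat_char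
  proof
    assume H: "\<forall>x\<in>carrier R. (x \<notin> nilrad R) = ar R x"
    show "\<forall>x\<in>S. (x \<notin> nilrad SR) = ar SR x"
    proof
      fix s assume s: "s \<in> S"
      have "s = s \<oplus> \<zero>" using s sc_carr by simp
      then show "(s \<notin> nilrad SR) = ar SR s" using K[OF s I_zero] H s sc_carr by blast
    qed
  next
    assume H: "\<forall>x\<in>S. (x \<notin> nilrad SR) = ar SR x"
    show "\<forall>x\<in>carrier R. (x \<notin> nilrad R) = ar R x"
    proof
      fix x assume x: "x \<in> carrier R"
      obtain s i where s: "s \<in> S" and i: "i \<in> I" and xd: "x = s \<oplus> i" using decomp[OF x] by blast
      show "(x \<notin> nilrad R) = ar R x" using K[OF s i xd] H s by blast
    qed
  qed
qed

end

context nil_split begin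

lemma pi_SR: "pi_complemented SR \<longleftrightarrow>
  (\<forall>a\<in>S. \<exists>n::nat. n \<ge> 1 \<and> (\<exists>b\<in>S. a [^] n \<otimes> b = \<zero> \<and> a [^] n \<oplus> b \<in> reg SR))"
  unfolding pi_complemented_def complemented_elem_def by (simp add: pow_SR)

lemma pi_R: "pi_complemented R \<longleftrightarrow>
  (\<forall>a\<in>carrier R. \<exists>n::nat. n \<ge> 1 \<and> (\<exists>b\<in>carrier R. a [^] n \<otimes> b = \<zero> \<and> a [^] n \<oplus> b \<in> reg R))"
  unfolding pi_complemented_def complemented_elem_def by simp

lemma tf: "torsion_free_over R S I \<longleftrightarrow> (\<forall>r\<in>reg SR. \<forall>m\<in>I. r \<otimes> m = \<zero> \<longrightarrow> m = \<zero>)"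
  unfolding torsion_free_over_def by simp

lemma regSR_S: "r \<in> reg SR \<Longrightarrow> r \<in> S" unfolding reg_SR by auto

lemma split_comp: assumes a: "a \<in> S" and b: "b \<in> carrier R" and ab: "a \<otimes> b = \<zero>"
  and r: "a \<oplus> b \<in> reg R"
  obtains s' i' where "s' \<in> S" "i' \<in> I" "b = s' \<oplus> i'" "a \<otimes> s' = \<zero>" "a \<oplus> s' \<in> reg R"
proof -
  have ac: "a \<in> carrier R" using a sc_carr by blast
  obtain s' i' where s': "s' \<in> S" and i': "i' \<in> I" and bd: "b = s' \<oplus> i'" using decomp[OF b] by blast
  have s'c: "s' \<in> carrier R" and i'c: "i' \<in> carrier R" using s' i' sc_carr ic_carr by auto
  have "a \<otimes> s' \<oplus> a \<otimes> i' = \<zero>" using ab bd ac s'c i'c by (simp add: r_distr)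
  then have 1: "a \<otimes> s' = \<zero>" using zero_dec[OF S_mult[OF a s'] I_lc[OF i' ac]] by blast
  have "a \<oplus> b = (a \<oplus> s') \<oplus> i'" using bd ac s'c i'c by (simp add: a_assoc)
  then have 2: "a \<oplus> s' \<in> reg R" using r reg_add_nil_iff[of "a \<oplus> s'" i'] ac s'c I_nil[OF i'] by simp
  show ?thesis using that s' i' bd 1 2 by blast
qed

lemma part2_fwd1: assumes H: "pi_complemented R" shows "pi_complemented SR"
  unfolding pi_SR
proof
  fix a assume a: "a \<in> S"
  have ac: "a \<in> carrier R" using a sc_carr by blast
  obtain n :: nat and b where n: "n \<ge> 1" and b: "b \<in> carrier R" and ab: "a [^] n \<otimes> b = \<zero>"
    and r: "a [^] n \<oplus> b \<in> reg R" using H ac unfolding pi_R by blast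
  obtain s' i' where s': "s' \<in> S" and "a [^] n \<otimes> s' = \<zero>" and "a [^] n \<oplus> s' \<in> reg R"
    using split_comp[OF S_pow[OF a] b ab r] by blast
  then have "a [^] n \<otimes> s' = \<zero>" "a [^] n \<oplus> s' \<in> reg SR"
    using regK[OF S_add[OF S_pow[OF a] s']] by auto
  then show "\<exists>n::nat. n \<ge> 1 \<and> (\<exists>b\<in>S. a [^] n \<otimes> b = \<zero> \<and> a [^] n \<oplus> b \<in> reg SR)"
    using n s' by blast
qed

lemma part2_fwd2: assumes H: "pi_complemented R" shows "torsion_free_over R S I"
  unfolding tf
proof (intro ballI impI)
  fix r m assume r: "r \<in> reg SR" and m: "m \<in> I" and rm: "r \<otimes> m = \<zero>"
  have rS: "r \<in> S" using regSR_S[OF r] .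
  have rc: "r \<in> carrier R" using rS sc_carr by blast
  have mc: "m \<in> carrier R" using m ic_carr by blast
  obtain n :: nat and b where n: "n \<ge> 1" and b: "b \<in> carrier R" and ab: "r [^] n \<otimes> b = \<zero>"
    and rr: "r [^] n \<oplus> b \<in> reg R" using H rc unfolding pi_R by blast
  obtain s' i' where s': "s' \<in> S" and i': "i' \<in> I" and bd: "b = s' \<oplus> i'"
    and z: "r [^] n \<otimes> s' = \<zero>" and "r [^] n \<oplus> s' \<in> reg R"
    using split_comp[OF S_pow[OF rS] b ab rr] by blast
  have "r [^]\<^bsub>SR\<^esub> n \<in> reg SR" using cring.reg_pow[OF scr r] .
  then have "r [^] n \<in> reg SR" by (simp add: pow_SR)
  then have "s' = \<zero>" using z s' unfolding reg_SR by blast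
  then have "r [^] n \<in> reg R" using \<open>r [^] n \<oplus> s' \<in> reg R\<close> rc by simp
  moreover obtain k where nk: "n = Suc k" using n by (cases n) auto
  have "r [^] n \<otimes> m = r [^] k \<otimes> (r \<otimes> m)" using nk rc mc by (simp add: m_assoc)
  then have "r [^] n \<otimes> m = \<zero>" using rm rc by simp
  ultimately show "m = \<zero>" using mc unfolding reg_def by blast
qed

lemma part2_bwd: assumes H: "pi_complemented SR" and T: "torsion_free_over R S I"
  shows "pi_complemented R"
  unfolding pi_R
proof
  fix t assume t: "t \<in> carrier R"
  obtain s i where s: "s \<in> S" and i: "i \<in> I" and td: "t = s \<oplus> i" using decomp[OF t] by blast
  have sc: "s \<in> carrier R" and ic: "i \<in> carrier R" using s i sc_carr ic_carr by auto
  obtain n :: nat and s' where n: "n \<ge> 1" and s': "s' \<in> S" and z: "s [^] n \<otimes> s' = \<zero>"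
    and rs: "s [^] n \<oplus> s' \<in> reg SR" using H s unfolding pi_SR by blast
  have s'c: "s' \<in> carrier R" using s' sc_carr by blast
  have snc: "s [^] n \<in> carrier R" using sc by simp
  have rR: "s [^] n \<oplus> s' \<in> reg R"
    using regK[OF S_add[OF S_pow[OF s] s']] rs T unfolding tf by blast
  obtain j where j: "j \<in> I" and tn: "t [^] n = s [^] n \<oplus> j"
    using pow_add_ideal[OF idl sc i] td by blast
  have jc: "j \<in> carrier R" using j ic_carr by blast
  obtain p :: nat where jp: "j [^] p = \<zero>" using I_nil[OF j] unfolding nilrad_def by blast
  define q where "q = Suc p"
  have jq: "j [^] q = \<zero>" unfolding q_def using jp jc by simp
  have "t [^] n \<otimes> s' = s [^] n \<otimes> s' \<oplus> j \<otimes> s'" using tn snc jc s'c by (simp add: l_distr)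
  then have ts: "t [^] n \<otimes> s' = j \<otimes> s'" using z jc s'c by simp
  have tnc: "t [^] n \<in> carrier R" using t by simp
  have e1: "t [^] (n * q) \<otimes> s' [^] q = \<zero>"
  proof -
    have "t [^] (n * q) \<otimes> s' [^] q = (t [^] n) [^] q \<otimes> s' [^] q" using t by (simp add: nat_pow_pow)
    also have "\<dots> = (t [^] n \<otimes> s') [^] q" using tnc s'c by (simp add: nat_pow_distrib)
    also have "\<dots> = (j \<otimes> s') [^] q" using ts by simp
    also have "\<dots> = j [^] q \<otimes> s' [^] q" using jc s'c by (simp add: nat_pow_distrib)
    finally show ?thesis using jq s'c by simp
  qed
  obtain j' where j': "j' \<in> I" and e: "(s [^] n \<oplus> j) [^] q = (s [^] n) [^] q \<oplus> j'"
    using pow_add_ideal[OF idl snc j] by blast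
  have j'c: "j' \<in> carrier R" using j' ic_carr by blast
  have "t [^] (n * q) \<oplus> s' [^] q = ((s [^] n) [^] q \<oplus> s' [^] q) \<oplus> j'"
    using t e tn snc s'c j'c by (simp add: nat_pow_pow[symmetric] a_ac)
  also have "(s [^] n) [^] q \<oplus> s' [^] q = (s [^] n \<oplus> s') [^] q"
    unfolding q_def using pow_sum_orth[OF snc s'c z] by simp
  finally have e2: "t [^] (n * q) \<oplus> s' [^] q = (s [^] n \<oplus> s') [^] q \<oplus> j'" .
  have "(s [^] n \<oplus> s') [^] q \<oplus> j' \<in> reg R"
    using reg_add_nil[OF reg_pow[OF rR] I_nil[OF j']] .
  then have "t [^] (n * q) \<oplus> s' [^] q \<in> reg R" using e2 by simp
  moreover have "n * q \<ge> 1" using n unfolding q_def by simp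
  moreover have "s' [^] q \<in> carrier R" using s'c by simp
  ultimately show "\<exists>n::nat. n \<ge> 1 \<and> (\<exists>b\<in>carrier R. t [^] n \<otimes> b = \<zero> \<and> t [^] n \<oplus> b \<in> reg R)"
    using e1 by blast
qed

lemma part2: "pi_complemented R \<longleftrightarrow> pi_complemented SR \<and> torsion_free_over R S I"
  using part2_fwd1 part2_fwd2 part2_bwd by blast

end

theorem mainTheorem11:
  fixes T :: "('a, 'b) ring_scheme" and S I :: "'a set"
  assumes "cring T"
    and "subring S T"
    and "ideal I T"
    and "I \<subseteq> nilrad T"
    and "carrier T = S <+>\<^bsub>T\<^esub> I"
    and "S \<inter> I = {\<zero>\<^bsub>T\<^esub>}"
  shows "(almost_complemented T \<longleftrightarrow> almost_complemented (T\<lparr>carrier := S\<rparr>))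
    \<and> (pi_complemented T \<longleftrightarrow>
         pi_complemented (T\<lparr>carrier := S\<rparr>) \<and> torsion_free_over T S I)
    \<and> (property_D_flat T \<longleftrightarrow> property_D_flat (T\<lparr>carrier := S\<rparr>))"
proof -
  interpret X: nil_split T S I
    by (intro nil_split.intro nil_split_axioms.intro) (rule assms)+
  show ?thesis using X.part1 X.part2 X.part3 by blast
qed

end
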